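(* Let $\delta>0$, $\beta\ge1$ and let $k\ge3$ be an integer. For integers $n\ge k+1$ define \[\Delta_k^n=\big(n^\beta-(n-k)^\beta-2\big)^{-\delta}-\big((n+1)^\beta-(n-k)^\beta\big)^{-\delta}.\] Then $n\mapsto\Delta_k^n$ is non-increasing on $\{n\in\mathbb{N}:n\ge k+1\}$. *)

theory Defs
  imports Complex_Main
begin

text \<open>Delta_k^n = (n^beta - (n-k)^beta - 2)^(-delta) - ((n+1)^beta - (n-k)^beta)^(-delta),
  real exponents rendered with powr (all bases are positive for n >= k+1).\<close>
definition Delta :: "real \<Rightarrow> real \<Rightarrow> nat \<Rightarrow> nat \<Rightarrow> real" where
  "Delta \<delta> \<beta> k n =
     (real n powr \<beta> - real (n - k) powr \<beta> - 2) powr (- \<delta>)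
     - ((real n + 1) powr \<beta> - real (n - k) powr \<beta>) powr (- \<delta>)"

end

theory Submission
  imports Defs
begin

definition ph :: "real \<Rightarrow> real \<Rightarrow> real" where
  "ph b x = (x + 1) powr b - x powr b"

lemma gm:
  fixes A b :: real
  assumes A: "0 < A" and b: "b \<ge> 1"
  shows "\<exists>e. A < e \<and> e < A + 1 \<and> ph b (A+1) * e powr (b-1) = ph b A * (e+1) powr (b-1)"
proof -
  have d1: "((\<lambda>t. (t+1) powr b) has_real_derivative b * (t+1) powr (b-1)) (at t)" if "t > 0" for t
    using DERIV_fun_powr[of "\<lambda>t. t+1" 1 t b] that by (auto intro!: derivative_eq_intros)
  have d2: "((\<lambda>t. t powr b) has_real_derivative b * t powr (b-1)) (at t)" if "t > 0" for t
    using has_real_derivative_powr that by blast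
  have "\<exists>c. A < c \<and> c < A+1 \<and> ((A+1+1) powr b - (A+1) powr b) * (b * c powr (b-1))
          = ((A+1) powr b - A powr b) * (b * (c+1) powr (b-1))"
    apply (rule GMVT'[where f="\<lambda>t. (t+1) powr b" and g="\<lambda>t. t powr b", simplified])
    apply simp
    subgoal for z using A d1[of z] DERIV_isCont by force
    subgoal for z using A d2[of z] DERIV_isCont by force
    subgoal for z using A d2[of z] by force
    subgoal for z using A d1[of z] by force
    done
  then obtain c where c: "A < c" "c < A+1" "((A+1+1) powr b - (A+1) powr b) * (b * c powr (b-1))
          = ((A+1) powr b - A powr b) * (b * (c+1) powr (b-1))" by blast
  have "ph b (A+1) * c powr (b-1) = ph b A * (c+1) powr (b-1)"
    using c(3) b unfolding ph_def by (simp add: add.assoc)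
  then show ?thesis using c by blast
qed

lemma ph_nonneg: "0 \<le> x \<Longrightarrow> b \<ge> 0 \<Longrightarrow> ph b x \<ge> 0"
  unfolding ph_def using powr_mono2[of b x "x+1"] by simp

lemma ph_ge1:
  assumes t: "t \<ge> 1" and b: "b \<ge> 1"
  shows "ph b t \<ge> 1"
proof -
  have e1: "(t+1) powr b = (t+1) * (t+1) powr (b-1)"
    using powr_add[of "t+1" 1 "b-1"] t by simp
  have e2: "t powr b = t * t powr (b-1)"
    using powr_add[of t 1 "b-1"] t by simp
  have m: "t powr (b-1) \<le> (t+1) powr (b-1)" using powr_mono2[of "b-1" t "t+1"] t b by simp
  have o: "1 \<le> t powr (b-1)" using powr_mono2[of "b-1" 1 t] t b by simp
  have "(t+1) * t powr (b-1) \<le> (t+1) * (t+1) powr (b-1)" using m t by (intro mult_left_mono) auto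
  then show ?thesis unfolding ph_def using e1 e2 o by (simp add: algebra_simps)
qed

lemma ph_step:
  assumes A: "0 < A" and b: "b \<ge> 1"
  shows "ph b A \<le> ph b (A+1)"
proof -
  obtain e where e: "A < e" "e < A+1" "ph b (A+1) * e powr (b-1) = ph b A * (e+1) powr (b-1)"
    using gm[OF A b] by blast
  have ep: "e powr (b-1) > 0" using e A by simp
  have "e powr (b-1) \<le> (e+1) powr (b-1)" using powr_mono2[of "b-1" e "e+1"] e A b by simp
  then have "ph b A * e powr (b-1) \<le> ph b A * (e+1) powr (b-1)"
    using ph_nonneg[of A b] A b by (intro mult_left_mono) auto
  then have "ph b A * e powr (b-1) \<le> ph b (A+1) * e powr (b-1)" using e(3) by simp
  then show ?thesis using ep by simp
qed

lemma ph_ratio: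
  assumes A: "0 < A" and AB: "A + 1 \<le> B" and b: "b \<ge> 1"
  shows "ph b (B+1) * ph b A \<le> ph b B * ph b (A+1)"
proof -
  have B: "0 < B" using A AB by simp
  obtain e where e: "A < e" "e < A+1" "ph b (A+1) * e powr (b-1) = ph b A * (e+1) powr (b-1)"
    using gm[OF A b] by blast
  obtain c where c: "B < c" "c < B+1" "ph b (B+1) * c powr (b-1) = ph b B * (c+1) powr (b-1)"
    using gm[OF B b] by blast
  have ec: "e \<le> c" using e c AB by simp
  have ep: "e powr (b-1) > 0" "c powr (b-1) > 0" using e c A B by auto
  have "((c+1)*e) powr (b-1) \<le> (c*(e+1)) powr (b-1)"
    using powr_mono2[of "b-1" "(c+1)*e" "c*(e+1)"] ec e A b by (simp add: algebra_simps)
  then have key: "(c+1) powr (b-1) * e powr (b-1) \<le> c powr (b-1) * (e+1) powr (b-1)"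
    by (simp add: powr_mult)
  have nn: "ph b B * ph b A \<ge> 0" using ph_nonneg[of A b] ph_nonneg[of B b] A B b by simp
  have "(ph b (B+1) * ph b A) * (c powr (b-1) * e powr (b-1))
      = (ph b B * ph b A) * ((c+1) powr (b-1) * e powr (b-1))"
    using c(3) by (simp add: algebra_simps)
  also have "\<dots> \<le> (ph b B * ph b A) * (c powr (b-1) * (e+1) powr (b-1))"
    using key nn by (intro mult_left_mono) auto
  also have "\<dots> = (ph b B * ph b (A+1)) * (c powr (b-1) * e powr (b-1))"
    using e(3) by (simp add: algebra_simps)
  finally show ?thesis using ep by (simp add: mult_le_cancel_right)
qed

lemma hstep:
  fixes d x y x' y' :: real
  assumes d: "d > 0" and x: "0 < x" and xy: "x \<le> y" and xx: "x \<le> x'" and yy: "y \<le> y'"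
    and cr: "y' * x \<le> x' * y"
  shows "y powr (-d) - y' powr (-d) \<le> x powr (-d) - x' powr (-d)"
proof -
  define l where "l = y / x"
  have l1: "l \<ge> 1" using x xy unfolding l_def by simp
  have yl: "y = l * x" using x unfolding l_def by simp
  have y'l: "y' \<le> l * x'" using cr x unfolding l_def by (simp add: field_simps)
  have yp: "0 < y'" using x xy yy by simp
  have "(l * x') powr (-d) \<le> y' powr (-d)" using powr_mono2'[of "-d" y' "l*x'"] d yp y'l by simp
  then have A: "l powr (-d) * x' powr (-d) \<le> y' powr (-d)" by (simp add: powr_mult)
  have B: "y powr (-d) = l powr (-d) * x powr (-d)" using yl by (simp add: powr_mult)
  have C: "x' powr (-d) \<le> x powr (-d)" using powr_mono2'[of "-d" x x'] d x xx by simp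
  have D: "l powr (-d) \<le> 1" using powr_mono2'[of "-d" 1 l] d l1 by simp
  have E: "l powr (-d) \<ge> 0" by simp
  have "l powr (-d) * (x powr (-d) - x' powr (-d)) \<le> 1 * (x powr (-d) - x' powr (-d))"
    using C D by (intro mult_right_mono) auto
  then show ?thesis using A B by (simp add: algebra_simps)
qed

lemma Delta_step:
  fixes d b :: real and k n :: nat
  assumes d: "d > 0" and b: "b \<ge> 1" and k: "k \<ge> 3" and n: "k + 1 \<le> n"
  shows "Delta d b k (Suc n) \<le> Delta d b k n"
proof -
  define a where "a = real (n - k)"
  have a1: "a \<ge> 1" using n unfolding a_def by simp
  have Na: "real n = a + real k" using n unfolding a_def by simp
  have Sa: "real (Suc n - k) = a + 1" using n unfolding a_def by simp
  define P where "P = (\<Sum>i<k. ph b (a + real i))"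
  define Q where "Q = (\<Sum>i<k. ph b (a + 1 + real i))"
  have Pe: "P = (a + real k) powr b - a powr b"
    unfolding P_def ph_def using sum_lessThan_telescope[of "\<lambda>i. (a + real i) powr b" k]
    by (simp add: add_ac)
  have Qe: "Q = (a + 1 + real k) powr b - (a+1) powr b"
    unfolding Q_def ph_def using sum_lessThan_telescope[of "\<lambda>i. (a + 1 + real i) powr b" k]
    by (simp add: add_ac)
  define N where "N = a + real k"
  define vn where "vn = ph b N"
  define vn1 where "vn1 = ph b (N+1)"
  have trm: "vn1 * ph b (a + real i) \<le> vn * ph b (a + 1 + real i)" if "i < k" for i
    using ph_ratio[of "a + real i" N b] a1 b that unfolding vn_def vn1_def N_def
    by (simp add: add_ac)
  have PQ: "vn1 * P \<le> vn * Q"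
    unfolding P_def Q_def sum_distrib_left by (rule sum_mono) (use trm in auto)
  have Pk: "P \<ge> real k"
  proof -
    have "(\<Sum>i<k. (1::real)) \<le> P" unfolding P_def
      by (rule sum_mono) (use ph_ge1 a1 b in auto)
    then show ?thesis by simp
  qed
  have QP: "P \<le> Q" unfolding P_def Q_def
  proof (rule sum_mono)
    fix i assume "i \<in> {..<k}"
    show "ph b (a + real i) \<le> ph b (a + 1 + real i)"
      using ph_step[of "a + real i" b] a1 b by (simp add: add_ac)
  qed
  have vv: "vn \<le> vn1" unfolding vn_def vn1_def N_def using ph_step[of "a + real k" b] a1 b by simp
  have vn0: "vn \<ge> 0" unfolding vn_def N_def using ph_nonneg[of "a + real k" b] a1 b by simp
  have x0: "0 < P - 2" using Pk k by simp
  have cr: "(Q + vn1) * (P - 2) \<le> (Q - 2) * (P + vn)"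
  proof -
    have "(Q - 2) * (P + vn) - (Q + vn1) * (P - 2) = (vn * Q - vn1 * P) + 2 * ((Q + vn1) - (P + vn))"
      by (simp add: algebra_simps)
    moreover have "(vn * Q - vn1 * P) + 2 * ((Q + vn1) - (P + vn)) \<ge> 0" using PQ QP vv by simp
    ultimately show ?thesis by linarith
  qed
  have H: "(P + vn) powr (-d) - (Q + vn1) powr (-d) \<le> (P - 2) powr (-d) - (Q - 2) powr (-d)"
    by (rule hstep[OF d x0]) (use vn0 QP vv cr in auto)
  have D1: "Delta d b k n = (P - 2) powr (-d) - (P + vn) powr (-d)"
    unfolding Delta_def Pe vn_def ph_def N_def a_def[symmetric] Na by simp
  have D2: "Delta d b k (Suc n) = (Q - 2) powr (-d) - (Q + vn1) powr (-d)"
    unfolding Delta_def Qe vn1_def ph_def N_def Sa using Na by (simp add: add_ac)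
  show ?thesis unfolding D1 D2 using H by simp
qed

theorem lemma3:
  fixes \<delta> \<beta> :: real and k :: nat
  assumes "\<delta> > 0" and "\<beta> \<ge> 1" and "k \<ge> 3"
  shows "\<forall>n m. k + 1 \<le> n \<longrightarrow> n \<le> m \<longrightarrow> Delta \<delta> \<beta> k m \<le> Delta \<delta> \<beta> k n"
proof (intro allI impI)
  fix n m :: nat
  assume n: "k + 1 \<le> n" and nm: "n \<le> m"
  from nm show "Delta \<delta> \<beta> k m \<le> Delta \<delta> \<beta> k n"
  proof (induction m rule: dec_induct)
    case base
    then show ?case by simp
  next
    case (step m)
    have "Delta \<delta> \<beta> k (Suc m) \<le> Delta \<delta> \<beta> k m"
      using Delta_step[of \<delta> \<beta> k m] assms n step.hyps by simp
    then show ?case using step.IH by simp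
  qed
qed

end
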